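(* For every integer $n\ge 3$, the square of the path $P_n^2$ admits a signed product cordial labeling.
   Context: A graph $G$ is signed product cordial if there is a vertex labeling $\alpha: V(G)\to\{1,-1\}$ such that, with the induced edge labeling $\alpha^*(uv)=\alpha(u)\alpha(v)$, we have $|v_\alpha(-1)-v_\alpha(1)|\le 1$ and $|e_{\alpha^*}(-1)-e_{\alpha^*}(1)|\le 1$. Here $v_\alpha(x)$ is the number of vertices labeled $x$ and $e_{\alpha^*}(x)$ is the number of edges labeled $x$; such an $\alpha$ is called a signed product cordial labeling. The square of the path $P_n^2$ is the graph obtained from the path $P_n=v_1v_2\cdots v_n$ by additionally joining every two vertices at distance $2$ in $P_n$. Thus its edges are $v_iv_{i+1}$ for $1\le i\le n-1$ and $v_iv_{i+2}$ for $1\le i\le n-2$. *)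

theory Defs
  imports Main
begin

definition vcount :: "'a set \<Rightarrow> ('a \<Rightarrow> int) \<Rightarrow> int \<Rightarrow> nat" where
  "vcount V \<alpha> x = card {v \<in> V. \<alpha> v = x}"

definition ecount :: "'a set set \<Rightarrow> ('a \<Rightarrow> int) \<Rightarrow> int \<Rightarrow> nat" where
  "ecount E \<alpha> x = card {e \<in> E. (\<exists>u v. e = {u, v} \<and> u \<noteq> v \<and> \<alpha> u * \<alpha> v = x)}"

definition signed_product_cordial_labeling ::
  "'a set \<Rightarrow> 'a set set \<Rightarrow> ('a \<Rightarrow> int) \<Rightarrow> bool" where
  "signed_product_cordial_labeling V E \<alpha> \<longleftrightarrow>
     (\<forall>v\<in>V. \<alpha> v \<in> {1, -1}) \<and>
     \<bar>int (vcount V \<alpha> (-1)) - int (vcount V \<alpha> 1)\<bar> \<le> 1 \<and>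
     \<bar>int (ecount E \<alpha> (-1)) - int (ecount E \<alpha> 1)\<bar> \<le> 1"

definition signed_product_cordial :: "'a set \<Rightarrow> 'a set set \<Rightarrow> bool" where
  "signed_product_cordial V E \<longleftrightarrow> (\<exists>\<alpha>. signed_product_cordial_labeling V E \<alpha>)"

definition path_sq_vertices :: "nat \<Rightarrow> nat set" where
  "path_sq_vertices n = {1..n}"

definition path_sq_edges :: "nat \<Rightarrow> nat set set" where
  "path_sq_edges n = {{i, i + 1} | i. 1 \<le> i \<and> i \<le> n - 1}
                   \<union> {{i, i + 2} | i. 1 \<le> i \<and> i \<le> n - 2}"

end

theory Submission
  imports Defs
begin

definition alt :: "nat \<Rightarrow> int" where "alt i = (if even i then 1 else -1)"

lemma alt_prod: "u \<noteq> v \<Longrightarrow> {u,v} = {i, i + k} \<Longrightarrow> alt u * alt v = alt i * alt (i + k)"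
  by (auto simp: doubleton_eq_iff)

lemma odd_card: "card {v \<in> {1..n::nat}. alt v = -1} = (n+1) div 2"
proof (induction n)
  case 0 then show ?case by simp
next
  case (Suc n)
  have "{v \<in> {1..Suc n}. alt v = -1} = {v \<in> {1..n}. alt v = -1} \<union> (if odd (Suc n) then {Suc n} else {})"
    by (auto simp: alt_def le_Suc_eq)
  then show ?case using Suc by (auto simp: alt_def)
qed

lemma even_card: "card {v \<in> {1..n::nat}. alt v = 1} = n div 2"
proof (induction n)
  case 0 then show ?case by simp
next
  case (Suc n)
  have "{v \<in> {1..Suc n}. alt v = 1} = {v \<in> {1..n}. alt v = 1} \<union> (if even (Suc n) then {Suc n} else {})"
    by (auto simp: alt_def le_Suc_eq)
  then show ?case using Suc by (auto simp: alt_def)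
qed

lemma card_fam: "card {{i, i + k} | i::nat. 1 \<le> i \<and> i \<le> m} = m" if "k > 0"
proof -
  have "{{i, i + k} | i::nat. 1 \<le> i \<and> i \<le> m} = (\<lambda>i. {i, i+k}) ` {1..m}" by auto
  moreover have "inj_on (\<lambda>i. {i, i+k}) {1..m}"
    using that by (auto simp: inj_on_def doubleton_eq_iff)
  ultimately show ?thesis by (simp add: card_image)
qed

theorem theorem2p3:
  fixes n :: nat
  assumes "n \<ge> 3"
  shows "signed_product_cordial (path_sq_vertices n) (path_sq_edges n)"
proof -
  let ?A = "{{i, i + 1} | i::nat. 1 \<le> i \<and> i \<le> n - 1}"
  let ?B = "{{i, i + 2} | i::nat. 1 \<le> i \<and> i \<le> n - 2}"
  have pA: "alt i * alt (i+1) = -1" for i by (simp add: alt_def)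
  have pB: "alt i * alt (i+2) = 1" for i by (simp add: alt_def)
  have e1: "{e \<in> path_sq_edges n. (\<exists>u v. e = {u, v} \<and> u \<noteq> v \<and> alt u * alt v = -1)} = ?A"
  proof (rule set_eqI, rule iffI)
    fix e assume h: "e \<in> {e \<in> path_sq_edges n. (\<exists>u v. e = {u, v} \<and> u \<noteq> v \<and> alt u * alt v = -1)}"
    then obtain u v where uv: "e = {u,v}" "u \<noteq> v" "alt u * alt v = -1" by auto
    show "e \<in> ?A"
    proof (rule ccontr)
      assume "e \<notin> ?A"
      with h obtain i where "e = {i, i+2}" by (auto simp: path_sq_edges_def)
      with uv alt_prod[of u v i 2] pB show False by auto
    qed
  next
    fix e assume "e \<in> ?A"
    then obtain i where i: "e = {i, i+1}" "1 \<le> i" "i \<le> n - 1" by auto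
    then show "e \<in> {e \<in> path_sq_edges n. (\<exists>u v. e = {u, v} \<and> u \<noteq> v \<and> alt u * alt v = -1)}"
    proof -
      have "\<exists>u v. e = {u, v} \<and> u \<noteq> v \<and> alt u * alt v = -1"
      proof (intro exI conjI)
        show "e = {i, i+1}" by (rule i(1))
      qed (use pA[of i] in auto)
      moreover have "e \<in> path_sq_edges n" unfolding path_sq_edges_def using i by blast
      ultimately show ?thesis by blast
    qed
  qed
  have e2: "{e \<in> path_sq_edges n. (\<exists>u v. e = {u, v} \<and> u \<noteq> v \<and> alt u * alt v = 1)} = ?B"
  proof (rule set_eqI, rule iffI)
    fix e assume h: "e \<in> {e \<in> path_sq_edges n. (\<exists>u v. e = {u, v} \<and> u \<noteq> v \<and> alt u * alt v = 1)}"
    then obtain u v where uv: "e = {u,v}" "u \<noteq> v" "alt u * alt v = 1" by auto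
    show "e \<in> ?B"
    proof (rule ccontr)
      assume "e \<notin> ?B"
      with h obtain i where "e = {i, i+1}" by (auto simp: path_sq_edges_def)
      with uv alt_prod[of u v i 1] pA show False by auto
    qed
  next
    fix e assume "e \<in> ?B"
    then obtain i where i: "e = {i, i+2}" "1 \<le> i" "i \<le> n - 2" by auto
    then show "e \<in> {e \<in> path_sq_edges n. (\<exists>u v. e = {u, v} \<and> u \<noteq> v \<and> alt u * alt v = 1)}"
    proof -
      have "\<exists>u v. e = {u, v} \<and> u \<noteq> v \<and> alt u * alt v = 1"
      proof (intro exI conjI)
        show "e = {i, i+2}" by (rule i(1))
      qed (use pB[of i] in auto)
      moreover have "e \<in> path_sq_edges n" unfolding path_sq_edges_def using i by blast
      ultimately show ?thesis by blast
    qed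
  qed
  have c1: "ecount (path_sq_edges n) alt (-1) = n - 1"
    unfolding ecount_def e1 by (rule card_fam) simp
  have c2: "ecount (path_sq_edges n) alt 1 = n - 2"
    unfolding ecount_def e2 by (rule card_fam) simp
  have v1: "vcount (path_sq_vertices n) alt (-1) = (n+1) div 2"
    unfolding vcount_def path_sq_vertices_def by (rule odd_card)
  have v2: "vcount (path_sq_vertices n) alt 1 = n div 2"
    unfolding vcount_def path_sq_vertices_def by (rule even_card)
  have "signed_product_cordial_labeling (path_sq_vertices n) (path_sq_edges n) alt"
    unfolding signed_product_cordial_labeling_def c1 c2 v1 v2
    using assms by (auto simp: alt_def)
  then show ?thesis unfolding signed_product_cordial_def by blast
qed

end
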